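(* Let $a\geq 3$ be an odd integer, let $\alpha\in B_a$, let $n\geq 1$ be an integer, and let $r$ be an odd positive integer with $r\leq 2a^n$. Then the line $y=\alpha\left(x-\frac{r}{2a^n}\right)$ in $\mathbb{R}^2$ contains no point of the form $\left(\frac{u}{a^l},\frac{v}{a^m}\right)$ with $u,v,l,m\in\mathbb{Z}$.
   Context: For an odd integer $a\geq 3$, $$B_a=\left\{\frac{p}{q}\ :\ p+q\leq a-1,\ 0\leq p\leq q\leq a-2,\ p,q\in\mathbb{N},\ p\text{ and }q\text{ odd}\right\},$$ where $\mathbb{N}=\{1,2,3,\dots\}$. *)

theory Defs
  imports Complex_Main
begin

definition B :: "int \<Rightarrow> real set" where
  "B a = {of_int p / of_int q | p q :: int.
            1 \<le> p \<and> 1 \<le> q \<and> p + q \<le> a - 1 \<and> p \<le> q \<and> q \<le> a - 2 \<and> odd p \<and> odd q}"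

end

theory Submission
  imports Defs
begin

lemma powi_split:
  fixes a :: int and m :: int and k :: nat
  assumes "a \<noteq> 0" "m \<le> int k"
  shows "(of_int a :: real) ^ k = of_int a powi m * of_int (a ^ nat (int k - m))"
proof -
  have "(of_int a :: real) ^ k = of_int a powi (int k)" by simp
  also have "\<dots> = of_int a powi (m + (int k - m))" by simp
  also have "\<dots> = of_int a powi m * of_int a powi (int k - m)"
    using assms by (subst power_int_add) auto
  also have "of_int a powi (int k - m) = (of_int a :: real) ^ nat (int k - m)"
    using assms by (metis diff_ge_0_iff_ge power_int_of_nat int_nat_eq)
  finally show ?thesis by simp
qed

theorem lemma3p2:
  fixes a :: int and \<alpha> :: real and n :: nat and r :: int
  assumes "odd a" and "a \<ge> 3"
    and "\<alpha> \<in> B a"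
    and "n \<ge> 1"
    and "odd r" and "r > 0" and "r \<le> 2 * a ^ n"
  shows "\<not> (\<exists>u v l m :: int.
            of_int v / (of_int a powi m)
              = \<alpha> * (of_int u / (of_int a powi l) - of_int r / (2 * of_int a ^ n)))"
proof
  assume "\<exists>u v l m :: int.
            of_int v / (of_int a powi m)
              = \<alpha> * (of_int u / (of_int a powi l) - of_int r / (2 * of_int a ^ n))"
  then obtain u v l m :: int where eq: "of_int v / (of_int a powi m)
              = \<alpha> * (of_int u / (of_int a powi l) - of_int r / (2 * of_int a ^ n))" by blast
  obtain p q :: int where pq: "\<alpha> = of_int p / of_int q" "1 \<le> q" "odd p"
    using assms(3) unfolding B_def by blast
  have a0: "a \<noteq> 0" using assms(2) by simp
  have ar0: "(of_int a :: real) \<noteq> 0" using a0 by simp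
  define k where "k = nat (\<bar>l\<bar> + \<bar>m\<bar>) + n"
  have hm: "(of_int a :: real) ^ k = of_int a powi m * of_int (a ^ nat (int k - m))"
    by (rule powi_split[OF a0]) (simp add: k_def)
  have hl: "(of_int a :: real) ^ k = of_int a powi l * of_int (a ^ nat (int k - l))"
    by (rule powi_split[OF a0]) (simp add: k_def)
  have hn: "(of_int a :: real) ^ k = of_int a ^ n * of_int (a ^ (k - n))"
    by (simp add: k_def power_add[symmetric] add.commute)
  define A where "A = a ^ nat (int k - m)"
  define L where "L = a ^ nat (int k - l)"
  define N where "N = a ^ (k - n)"
  have pm: "(of_int a :: real) powi m \<noteq> 0" using ar0 by simp
  have pl: "(of_int a :: real) powi l \<noteq> 0" using ar0 by simp
  have pn: "(of_int a :: real) ^ n \<noteq> 0" using ar0 by simp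
  have q0: "(of_int q :: real) \<noteq> 0" using pq(2) by simp
  have e1: "(of_int v :: real) * of_int q = of_int p * (of_int u * of_int a powi m / of_int a powi l
        - of_int r * of_int a powi m / (2 * of_int a ^ n))"
    using eq pm q0 unfolding pq(1) by (simp add: field_simps)
  have "(of_int (2*q*v*A) :: real) = of_int (2 * p * u * L - p * r * N)"
  proof -
    have "(of_int (2*q*v*A) :: real) = 2 * (of_int v * of_int q) * of_int A" by simp
    also have "\<dots> = of_int p * (2 * of_int u * (of_int a powi m * of_int A) / of_int a powi l
        - of_int r * (of_int a powi m * of_int A) / (of_int a ^ n))"
      using e1 pn pl apply (simp add: field_simps) by (metis distrib_left)
    also have "\<dots> = of_int p * (2 * of_int u * (of_int a powi l * of_int L) / of_int a powi l
        - of_int r * (of_int a ^ n * of_int N) / (of_int a ^ n))"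
      using hm hl hn unfolding A_def L_def N_def by simp
    also have "\<dots> = of_int (2 * p * u * L - p * r * N)"
      using pl pn a0 by (simp add: field_simps)
    finally show ?thesis .
  qed
  hence ie: "2*q*v*A = 2 * p * u * L - p * r * N" by (simp only: of_int_eq_iff)
  have "odd N" unfolding N_def using assms(1) by simp
  hence "odd (p * r * N)" using pq(3) assms(5) by simp
  moreover have "even (p * r * N)"
  proof -
    have "p * r * N = 2 * (p * u * L - q * v * A)" using ie by (simp add: algebra_simps)
    thus ?thesis by simp
  qed
  ultimately show False by simp
qed

end
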